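(* Suppose $f(x)=x^m\pm1$, and let $G=(g_{ij})$ be a $k\times l$ matrix over $A$ whose rows $g^{(1)},\ldots,g^{(k)}$ form a basis of divisors of an $A$-code $C$. For each $i$ let $d_i=\deg L_{\mathrm{coef}}(g^{(i)})$ and let $\alpha_i$ be the constant coefficient of $L_{\mathrm{coef}}(g^{(i)})$. Let $G'$ be the $k\times l$ matrix with entries $\alpha_i^{-1}x^{d_i}g_{ij}(x^{-1})$ (computed in $A$, where $x$ is invertible). Then the rows of $G'$ form a basis of divisors of the $A$-code $(C^\perp)^{\perp_{\mathbb{F}}}$.
   Context: Let $\mathbb{F}$ be a finite field, $f(x)\in\mathbb{F}[x]$ monic of degree $m$, $A=\mathbb{F}[x]/\langle f(x)\rangle$, elements identified with polynomials of degree $<m$. An $A$-code of length $l$ is an $A$-submodule of $A^l$; $C^\perp=\{a\in A^l:\sum_ia_ic_i=0\ \forall c\in C\}$. Identify $\sum_{i=0}^{m-1}a_ix^i\in A$ with $(a_0,\ldots,a_{m-1})\in\mathbb{F}^m$ and $A^l$ with $\mathbb{F}^{lm}$ by concatenation; $D^{\perp_{\mathbb{F}}}$ is the dual of $D$ with respect to the standard dot product on $\mathbb{F}^{lm}$, viewed in $A^l$. For $u\in A^l$, $L_{\mathrm{ind}}(u)$ is the smallest index of a nonzero entry ($\infty$ if $u=0$) and $L_{\mathrm{coef}}(u)$ that entry. For nonzero $C$, $L_{\mathrm{ind}}(C)=\min_{u\in C}L_{\mathrm{ind}}(u)$; $L_{\mathrm{coef}}(C)$ is the monic polynomial $g$ of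 minimum degree such that some $c\in C$ has $L_{\mathrm{ind}}(c)=L_{\mathrm{ind}}(C)$ and $L_{\mathrm{coef}}(c)=g$ (such $c$ is a leading element). $C^{(1)}=C$, $C^{(n+1)}=\{c\in C^{(n)}:L_{\mathrm{ind}}(c)>L_{\mathrm{ind}}(C^{(n)})\}$ while $C^{(n)}\ne0$; with $k$ largest such that $C^{(k)}\neq0$, a tuple $(g^{(1)},\ldots,g^{(k)})$ with $g^{(j)}$ a leading element of $C^{(j)}$ is a basis of divisors of $C$. *)

theory Defs
  imports "HOL-Computational_Algebra.Polynomial" "HOL-Library.Extended_Nat"
begin

text \<open>Elements of A = F[x]/(f) are polynomials of degree < deg f; vectors in A^l are
  lists of length l of such polynomials.\<close>

definition Avec :: "'a::field poly \<Rightarrow> nat \<Rightarrow> 'a poly list set" where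
  "Avec f l = {v. length v = l \<and> (\<forall>x\<in>set v. degree x < degree f)}"

definition A_code :: "'a::field poly \<Rightarrow> nat \<Rightarrow> 'a poly list set \<Rightarrow> bool" where
  "A_code f l C \<longleftrightarrow> C \<subseteq> Avec f l \<and> replicate l 0 \<in> C
     \<and> (\<forall>u\<in>C. \<forall>v\<in>C. map2 (+) u v \<in> C)
     \<and> (\<forall>a. degree a < degree f \<longrightarrow> (\<forall>v\<in>C. map (\<lambda>y. (a * y) mod f) v \<in> C))"

definition dual :: "'a::field poly \<Rightarrow> nat \<Rightarrow> 'a poly list set \<Rightarrow> 'a poly list set" where
  "dual f l C = {a \<in> Avec f l. \<forall>c\<in>C. (\<Sum>i<l. a ! i * c ! i) mod f = 0}"

definition Fdual :: "'a::field poly \<Rightarrow> nat \<Rightarrow> 'a poly list set \<Rightarrow> 'a poly list set" where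
  "Fdual f l D = {a \<in> Avec f l. \<forall>c\<in>D.
      (\<Sum>i<l. \<Sum>j<degree f. coeff (a ! i) j * coeff (c ! i) j) = 0}"

definition Lind :: "'a::zero list \<Rightarrow> enat" where
  "Lind u = (if \<exists>i<length u. u ! i \<noteq> 0
             then enat (LEAST i. i < length u \<and> u ! i \<noteq> 0) else \<infinity>)"

definition Lcoef :: "'a::zero list \<Rightarrow> 'a" where
  "Lcoef u = (if \<exists>i<length u. u ! i \<noteq> 0
              then u ! (LEAST i. i < length u \<and> u ! i \<noteq> 0) else 0)"

definition Lind_code :: "'a::zero list set \<Rightarrow> enat" where
  "Lind_code C = (INF u\<in>C. Lind u)"

definition is_Lcoef_code :: "'a::field poly list set \<Rightarrow> 'a poly \<Rightarrow> bool" where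
  "is_Lcoef_code C g \<longleftrightarrow> lead_coeff g = 1
     \<and> (\<exists>c\<in>C. Lind c = Lind_code C \<and> Lcoef c = g)
     \<and> (\<forall>c\<in>C. Lind c = Lind_code C \<and> lead_coeff (Lcoef c) = 1 \<longrightarrow> degree g \<le> degree (Lcoef c))"

definition leading_element :: "'a::field poly list set \<Rightarrow> 'a poly list \<Rightarrow> bool" where
  "leading_element C c \<longleftrightarrow> c \<in> C \<and> Lind c = Lind_code C \<and> is_Lcoef_code C (Lcoef c)"

text \<open>code_seq C n is C^(n+1).\<close>
primrec code_seq :: "'a::zero list set \<Rightarrow> nat \<Rightarrow> 'a list set" where
  "code_seq C 0 = C"
| "code_seq C (Suc n) = {c \<in> code_seq C n. Lind c > Lind_code (code_seq C n)}"

definition nonzero_code :: "'a::zero list set \<Rightarrow> bool" where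
  "nonzero_code C \<longleftrightarrow> (\<exists>c\<in>C. Lind c \<noteq> \<infinity>)"

text \<open>gs ! j is g^(j+1); k = length gs.\<close>
definition basis_of_divisors :: "'a::field poly list set \<Rightarrow> 'a poly list list \<Rightarrow> bool" where
  "basis_of_divisors C gs \<longleftrightarrow>
     (\<forall>j<length gs. nonzero_code (code_seq C j))
     \<and> (\<forall>j\<ge>length gs. \<not> nonzero_code (code_seq C j))
     \<and> (\<forall>j<length gs. leading_element (code_seq C j) (gs ! j))"

definition xinv :: "'a::field poly \<Rightarrow> 'a poly" where
  "xinv f = (THE h. degree h < degree f \<and> ([:0, 1:] * h) mod f = 1)"

definition recip_row :: "'a::field poly \<Rightarrow> 'a poly list \<Rightarrow> 'a poly list" where
  "recip_row f g = (let \<alpha> = coeff (Lcoef g) 0; d = degree (Lcoef g) in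
      map (\<lambda>e. smult (inverse \<alpha>) ((monom 1 d * pcompose e (xinv f)) mod f)) g)"

end

theory Submission
  imports Defs "HOL-Number_Theory.Cong"
begin

lemma pcompose_monom: "pcompose (monom c n) q = smult c (q ^ n)"
  by (induct n) (simp_all add: monom_altdef pcompose_smult pcompose_mult pcompose_pCons)

lemma pcompose_cong:
  fixes f :: "'a::field poly"
  assumes "[q1 = q2] (mod f)"
  shows "[pcompose p q1 = pcompose p q2] (mod f)"
proof (induct p)
  case 0 then show ?case by simp
next
  case (pCons a p)
  then show ?case using assms by (simp add: pcompose_pCons cong_add cong_mult)
qed

lemma double_perp:
  fixes V :: "('i \<Rightarrow> 'a::field) set"
  assumes "finite I"
  shows "\<lbrakk>\<forall>v\<in>V. \<forall>i. i \<notin> I \<longrightarrow> v i = 0; (\<lambda>_. 0) \<in> V;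
    \<forall>u\<in>V. \<forall>v\<in>V. (\<lambda>i. u i + v i) \<in> V; \<forall>c. \<forall>v\<in>V. (\<lambda>i. c * v i) \<in> V;
    \<forall>i. i \<notin> I \<longrightarrow> b i = 0;
    \<forall>w. (\<forall>v\<in>V. (\<Sum>i\<in>I. w i * v i) = 0) \<longrightarrow> (\<Sum>i\<in>I. w i * b i) = 0\<rbrakk> \<Longrightarrow> b \<in> V"
  using assms
proof (induct I arbitrary: V b rule: finite_induct)
  case empty
  then have "b = (\<lambda>_. 0)" by auto
  then show ?case using empty by simp
next
  case (insert x I)
  note Vsup = insert.prems(1) and V0 = insert.prems(2) and Vadd = insert.prems(3)
    and Vsc = insert.prems(4) and bsup = insert.prems(5) and bperp = insert.prems(6)
  show ?case
  proof (cases "\<forall>v\<in>V. v x = 0")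
    case True
    define e where "e = (\<lambda>i. if i = x then 1 else (0::'a))"
    have se: "(\<Sum>i\<in>insert x I. e i * v i) = v x" for v
      using insert(1,2) by (auto simp: e_def intro!: sum.neutral)
    have "b x = 0" using bperp[rule_format, of e] True se by simp
    show ?thesis
    proof (rule insert.hyps(3)[of V b])
      show "\<forall>v\<in>V. \<forall>i. i \<notin> I \<longrightarrow> v i = 0"
      proof (intro ballI allI impI)
        fix v i assume "v \<in> V" "i \<notin> I"
        then show "v i = 0" using Vsup True by (cases "i = x") auto
      qed
      show "\<forall>i. i \<notin> I \<longrightarrow> b i = 0" using bsup \<open>b x = 0\<close> by auto
      show "\<forall>w. (\<forall>v\<in>V. (\<Sum>i\<in>I. w i * v i) = 0) \<longrightarrow> (\<Sum>i\<in>I. w i * b i) = 0"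
      proof (intro allI impI)
        fix w assume w: "\<forall>v\<in>V. (\<Sum>i\<in>I. w i * v i) = 0"
        have sw: "(\<Sum>i\<in>insert x I. (w(x := 0)) i * v i) = (\<Sum>i\<in>I. w i * v i)" for v
          using insert(1,2) by (simp, intro sum.cong) auto
        show "(\<Sum>i\<in>I. w i * b i) = 0" using bperp[rule_format, of "w(x := 0)"] w sw by simp
      qed
    qed (use V0 Vadd Vsc insert(1) in auto)
  next
    case False
    then obtain p where p: "p \<in> V" "p x \<noteq> 0" by auto
    define p1 where "p1 = (\<lambda>i. inverse (p x) * p i)"
    have p1V: "p1 \<in> V" using Vsc p by (simp add: p1_def)
    have p1x: "p1 x = 1" using p by (simp add: p1_def)
    define V' where "V' = (\<lambda>v. (\<lambda>i. v i - v x * p1 i)) ` V"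
    define b' where "b' = (\<lambda>i. b i - b x * p1 i)"
    have p1sup: "\<forall>i. i \<notin> insert x I \<longrightarrow> p1 i = 0" using Vsup p1V by blast
    have "b' \<in> V'"
    proof (rule insert.hyps(3)[of V' b'])
      show "\<forall>v\<in>V'. \<forall>i. i \<notin> I \<longrightarrow> v i = 0"
      proof (intro ballI allI impI)
        fix v i assume "v \<in> V'" "i \<notin> I"
        then obtain v0 where "v0 \<in> V" "v = (\<lambda>i. v0 i - v0 x * p1 i)" by (auto simp: V'_def)
        then show "v i = 0" using Vsup p1sup p1x \<open>i \<notin> I\<close> by (cases "i = x") auto
      qed
      show "(\<lambda>_. 0) \<in> V'"
        unfolding V'_def by (rule image_eqI[of _ _ "\<lambda>_. 0"]) (simp_all add: V0)
      show "\<forall>u\<in>V'. \<forall>v\<in>V'. (\<lambda>i. u i + v i) \<in> V'"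
      proof (intro ballI)
        fix u v assume "u \<in> V'" "v \<in> V'"
        then obtain u0 v0 where "u0 \<in> V" "v0 \<in> V" "u = (\<lambda>i. u0 i - u0 x * p1 i)" "v = (\<lambda>i. v0 i - v0 x * p1 i)"
          by (auto simp: V'_def)
        then show "(\<lambda>i. u i + v i) \<in> V'" unfolding V'_def
          by (intro image_eqI[of _ _ "\<lambda>i. u0 i + v0 i"]) (auto simp: algebra_simps Vadd)
      qed
      show "\<forall>c. \<forall>v\<in>V'. (\<lambda>i. c * v i) \<in> V'"
      proof (intro allI ballI)
        fix c v assume "v \<in> V'"
        then obtain v0 where "v0 \<in> V" "v = (\<lambda>i. v0 i - v0 x * p1 i)"
          by (auto simp: V'_def)
        then show "(\<lambda>i. c * v i) \<in> V'" unfolding V'_def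
          by (intro image_eqI[of _ _ "\<lambda>i. c * v0 i"]) (auto simp: algebra_simps Vsc)
      qed
      show "\<forall>i. i \<notin> I \<longrightarrow> b' i = 0"
      proof (intro allI impI)
        fix i assume "i \<notin> I"
        then show "b' i = 0" using bsup p1sup p1x by (cases "i = x") (auto simp: b'_def)
      qed
      show "\<forall>w. (\<forall>v\<in>V'. (\<Sum>i\<in>I. w i * v i) = 0) \<longrightarrow> (\<Sum>i\<in>I. w i * b' i) = 0"
      proof (intro allI impI)
        fix w assume w: "\<forall>v\<in>V'. (\<Sum>i\<in>I. w i * v i) = 0"
        define t where "t = (\<Sum>i\<in>I. w i * p1 i)"
        have lin: "(\<Sum>i\<in>I. w i * (v i - v x * p1 i)) = (\<Sum>i\<in>I. w i * v i) - v x * t" for v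
          by (simp add: t_def algebra_simps sum_subtractf sum_distrib_left)
        have sw: "(\<Sum>i\<in>insert x I. (w(x := - t)) i * v i) = (\<Sum>i\<in>I. w i * v i) - v x * t" for v
        proof -
          have "(\<Sum>i\<in>insert x I. (w(x := - t)) i * v i) = - t * v x + (\<Sum>i\<in>I. (w(x := - t)) i * v i)"
            using insert(1,2) by simp
          also have "(\<Sum>i\<in>I. (w(x := - t)) i * v i) = (\<Sum>i\<in>I. w i * v i)"
            using insert(2) by (intro sum.cong) auto
          finally show ?thesis by (simp add: algebra_simps)
        qed
        have "\<forall>v\<in>V. (\<Sum>i\<in>insert x I. (w(x := - t)) i * v i) = 0"
        proof
          fix v assume "v \<in> V"
          then have vV: "(\<lambda>i. v i - v x * p1 i) \<in> V'" by (auto simp: V'_def)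
          have "(\<Sum>i\<in>I. w i * (v i - v x * p1 i)) = 0" using w[rule_format, OF vV] by simp
          then show "(\<Sum>i\<in>insert x I. (w(x := - t)) i * v i) = 0" unfolding lin sw .
        qed
        then have "(\<Sum>i\<in>insert x I. (w(x := - t)) i * b i) = 0" using bperp by blast
        then show "(\<Sum>i\<in>I. w i * b' i) = 0" using sw lin unfolding b'_def by simp
      qed
    qed
    then obtain v where v: "v \<in> V" "b' = (\<lambda>i. v i - v x * p1 i)" by (auto simp: V'_def)
    have "b = (\<lambda>i. v i + (b x - v x) * p1 i)"
    proof
      fix i
      have "b' i = v i - v x * p1 i" using v by simp
      then show "b i = v i + (b x - v x) * p1 i" by (simp add: b'_def algebra_simps)
    qed
    moreover have q: "(\<lambda>i. (b x - v x) * p1 i) \<in> V" using Vsc p1V by blast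
    ultimately show ?thesis using Vadd[rule_format, OF v(1) q] by simp
  qed
qed

lemma Lind_ge_iff: "t \<le> Lind v \<longleftrightarrow> (\<forall>i<length v. v ! i \<noteq> 0 \<longrightarrow> t \<le> enat i)"
proof (cases "\<exists>i<length v. v ! i \<noteq> 0")
  case True
  define k where "k = (LEAST i. i < length v \<and> v ! i \<noteq> 0)"
  have k: "k < length v \<and> v ! k \<noteq> 0" using LeastI_ex[OF True] by (simp add: k_def)
  have kl: "\<And>i. i < length v \<Longrightarrow> v ! i \<noteq> 0 \<Longrightarrow> k \<le> i" by (simp add: k_def Least_le)
  have "Lind v = enat k" using True by (simp add: Lind_def k_def)
  then show ?thesis using k kl by (auto intro: order_trans)
next
  case False
  then show ?thesis unfolding Lind_def if_not_P[OF False] by auto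
qed

lemma Lind_eq_enat: "Lind v = enat i \<longleftrightarrow> (i < length v \<and> v ! i \<noteq> 0 \<and> (\<forall>j<i. v ! j = 0))"
proof
  assume L: "Lind v = enat i"
  then have ex: "\<exists>i<length v. v ! i \<noteq> 0" by (auto simp: Lind_def split: if_splits)
  then have i: "i = (LEAST i. i < length v \<and> v ! i \<noteq> 0)" using L by (simp add: Lind_def)
  show "i < length v \<and> v ! i \<noteq> 0 \<and> (\<forall>j<i. v ! j = 0)"
    using LeastI_ex[OF ex] not_less_Least[where P="\<lambda>i. i < length v \<and> v ! i \<noteq> 0"] i
    by (metis (mono_tags, lifting) order.strict_trans)
next
  assume a: "i < length v \<and> v ! i \<noteq> 0 \<and> (\<forall>j<i. v ! j = 0)"
  then have "(LEAST i. i < length v \<and> v ! i \<noteq> 0) = i"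
    by (intro Least_equality) (auto simp: not_less[symmetric])
  then show "Lind v = enat i" using a by (auto simp: Lind_def)
qed

lemma Lcoef_at: "Lind v = enat i \<Longrightarrow> Lcoef v = v ! i"
  by (auto simp: Lind_def Lcoef_def split: if_splits)

lemma Lind_map:
  assumes "\<forall>x\<in>set v. \<phi> x = 0 \<longleftrightarrow> x = 0"
  shows "Lind (map \<phi> v) = Lind v"
proof -
  have "\<forall>i<length v. (\<phi> (v ! i) = 0) = (v ! i = 0)" using assms by (metis nth_mem)
  then have e: "(\<lambda>i. i < length (map \<phi> v) \<and> map \<phi> v ! i \<noteq> 0) = (\<lambda>i. i < length v \<and> v ! i \<noteq> 0)"
    by (auto simp: fun_eq_iff)
  show ?thesis unfolding Lind_def e by simp
qed

lemma Lcoef_map: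
  assumes "\<forall>x\<in>set v. \<phi> x = 0 \<longleftrightarrow> x = 0" "\<phi> 0 = 0"
  shows "Lcoef (map \<phi> v) = \<phi> (Lcoef v)"
proof -
  have "\<forall>i<length v. (\<phi> (v ! i) = 0) = (v ! i = 0)" using assms by (metis nth_mem)
  then have e: "(\<lambda>i. i < length (map \<phi> v) \<and> map \<phi> v ! i \<noteq> 0) = (\<lambda>i. i < length v \<and> v ! i \<noteq> 0)"
    by (auto simp: fun_eq_iff)
  have e2: "(\<exists>i<length (map \<phi> v). map \<phi> v ! i \<noteq> 0) = (\<exists>i<length v. v ! i \<noteq> 0)"
    using e by (metis (mono_tags, lifting))
  show ?thesis
  proof (cases "\<exists>i<length v. v ! i \<noteq> 0")
    case True
    have "(LEAST i. i < length v \<and> v ! i \<noteq> 0) < length v"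
      using LeastI_ex[OF True] by simp
    then show ?thesis using True unfolding Lcoef_def e e2 by simp
  next
    case False
    then show ?thesis unfolding Lcoef_def e2 if_not_P[OF False] using assms(2) by simp
  qed
qed

lemma Lind_map_ge: "\<phi> 0 = 0 \<Longrightarrow> Lind v \<le> Lind (map \<phi> v)"
  unfolding Lind_ge_iff[of "Lind v" "map \<phi> v"]
  by (metis (mono_tags, lifting) Lind_ge_iff length_map nth_map order_refl)

lemma Lind_add: "length u = length v \<Longrightarrow> min (Lind u) (Lind (v :: 'b::monoid_add list)) \<le> Lind (map2 (+) u v)"
  unfolding Lind_ge_iff[of _ "map2 (+) u v"]
proof (intro allI impI)
  fix i assume "length u = length v" "i < length (map2 (+) u v)" "map2 (+) u v ! i \<noteq> 0"
  then have i: "i < length u" "u ! i + v ! i \<noteq> 0" by auto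
  then have "u ! i \<noteq> 0 \<or> v ! i \<noteq> 0" by auto
  moreover have "u ! i \<noteq> 0 \<Longrightarrow> Lind u \<le> enat i" using i Lind_ge_iff[of "Lind u" u] by auto
  moreover have "v ! i \<noteq> 0 \<Longrightarrow> Lind v \<le> enat i" using i \<open>length u = length v\<close> Lind_ge_iff[of "Lind v" v] by auto
  ultimately show "min (Lind u) (Lind v) \<le> enat i" by (auto simp: min_le_iff_disj)
qed

lemma code_seq_sub: "code_seq C j \<subseteq> C"
  by (induct j) auto

lemma Lind_code_le: "c \<in> X \<Longrightarrow> Lind_code X \<le> Lind c"
  by (simp add: Lind_code_def INF_lower)

locale xm = fixes f :: "'a::field poly" and m :: nat and s :: 'a
  assumes m_pos: "0 < m" and s_cases: "s = 1 \<or> s = -1" and f_def: "f = monom 1 m + [:s:]"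
begin

lemma ss: "s * s = 1" using s_cases by auto
lemma s_nz: "s \<noteq> 0" using s_cases by auto
lemma deg_f: "degree f = m"
  using m_pos by (simp add: f_def degree_add_eq_left degree_monom_eq)
lemma f_nz: "f \<noteq> 0" using deg_f m_pos by auto
lemma coeff_f0: "coeff f 0 = s" using m_pos by (simp add: f_def)

definition X :: "'a poly" where "X = [:0,1:]"
definition h :: "'a poly" where "h = monom (-s) (m - 1)"

lemma Xpow: "X ^ n = monom 1 n" by (simp add: X_def monom_altdef)

lemma Xm_cong: "[monom 1 m = [:-s:]] (mod f)"
proof -
  have "monom 1 m - [:-s:] = f" by (simp add: f_def)
  then show ?thesis by (simp add: cong_iff_dvd_diff)
qed

lemma Xh_eq: "X * h = monom (-s) m"
proof -
  have "X * h = monom (-s) (Suc (m - 1))" by (simp add: X_def h_def monom_Suc)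
  then show ?thesis using m_pos by simp
qed

lemma Xh_cong: "[X * h = 1] (mod f)"
proof -
  have "X * h - 1 = smult (-s) f"
    by (simp add: Xh_eq f_def smult_add_right ss smult_monom) (simp add: monom_0 ss one_pCons)
  then show ?thesis unfolding cong_iff_dvd_diff using dvd_smult[OF dvd_refl[of f], of "-s"] by simp
qed


definition tau :: "nat \<Rightarrow> 'a poly" where
  "tau i = (if i = 0 then 1 else monom (-s) (m - i))"

lemma cancel_X:
  assumes "[X ^ i * a = X ^ i * b] (mod f)"
  shows "[a = b] (mod f)"
proof -
  have hx: "[h ^ i * X ^ i = 1] (mod f)"
    using cong_pow[OF Xh_cong, of i] by (simp add: power_mult_distrib mult.commute)
  have "[h ^ i * (X ^ i * a) = h ^ i * (X ^ i * b)] (mod f)"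
    using assms by (simp add: cong_mult)
  then have "[(h ^ i * X ^ i) * a = (h ^ i * X ^ i) * b] (mod f)" by (simp add: mult.assoc)
  moreover have "[(h ^ i * X ^ i) * a = 1 * a] (mod f)" "[(h ^ i * X ^ i) * b = 1 * b] (mod f)"
    using cong_mult[OF hx cong_refl[of a]] cong_mult[OF hx cong_refl[of b]] by simp_all
  ultimately show ?thesis by (metis cong_sym cong_trans mult_1)
qed

lemma cancel_X_dvd:
  assumes "f dvd X ^ i * D" shows "f dvd D"
proof -
  have "[X ^ i * D = X ^ i * 0] (mod f)" using assms by (simp add: cong_iff_dvd_diff)
  then have "[D = 0] (mod f)" by (rule cancel_X)
  then show ?thesis by (simp add: cong_iff_dvd_diff)
qed

lemma Xi_tau: "i < m \<Longrightarrow> [X ^ i * tau i = 1] (mod f)"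
proof (cases "i = 0")
  case False
  assume "i < m"
  then have "X ^ i * tau i = monom (-s) m"
    using False by (simp add: tau_def Xpow mult_monom)
  then show ?thesis using Xh_cong Xh_eq by simp
qed (simp add: tau_def)

lemma hpow_cong: "i < m \<Longrightarrow> [h ^ i = tau i] (mod f)"
proof -
  assume "i < m"
  have "[X ^ i * h ^ i = 1] (mod f)"
    using cong_pow[OF Xh_cong, of i] by (simp add: power_mult_distrib)
  then have "[X ^ i * h ^ i = X ^ i * tau i] (mod f)"
    using Xi_tau[OF \<open>i < m\<close>] by (metis cong_sym cong_trans)
  then show ?thesis by (rule cancel_X)
qed

lemma deg_tau: "degree (tau i) < m"
  using m_pos s_nz by (auto simp: tau_def degree_monom_eq)

lemma red_mod: "degree p < m \<Longrightarrow> p mod f = p"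
  by (simp add: mod_poly_less deg_f)

lemma hm_cong: "[h ^ m = [:-s:]] (mod f)"
proof -
  have a: "[X ^ m * h ^ m = 1] (mod f)"
    using cong_pow[OF Xh_cong, of m] by (simp add: power_mult_distrib)
  have "[X ^ m * h ^ m = [:-s:] * h ^ m] (mod f)"
    using cong_mult[OF Xm_cong cong_refl[of "h ^ m"]] by (simp add: Xpow)
  then have "[[:-s:] * h ^ m = 1] (mod f)" using a by (metis cong_sym cong_trans)
  then have "[[:-s:] * ([:-s:] * h ^ m) = [:-s:] * 1] (mod f)" using cong_mult cong_refl by blast
  moreover have "[:-s:] * ([:-s:] * h ^ m) = h ^ m"
  proof -
    have "[:-s:] * [:-s:] = (1 :: 'a poly)" by (simp add: ss one_pCons)
    then show ?thesis by (metis mult.assoc mult_1)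
  qed
  ultimately show ?thesis by (metis mult_1_right)
qed

lemma pcompose_f: "[pcompose f h = 0] (mod f)"
proof -
  have "pcompose f h = h ^ m + [:s:]" by (simp add: f_def pcompose_add pcompose_monom)
  moreover have "[h ^ m + [:s:] = [:-s:] + [:s:]] (mod f)" using cong_add[OF hm_cong cong_refl] by blast
  ultimately show ?thesis by (simp add: one_pCons)
qed

definition sg :: "'a poly \<Rightarrow> 'a poly" where "sg e = pcompose e h mod f"

lemma sg_cong: assumes "[p = q] (mod f)" shows "sg p = sg q"
proof -
  obtain k where k: "p - q = f * k" using assms by (auto simp: cong_iff_dvd_diff)
  have "pcompose p h - pcompose q h = pcompose f h * pcompose k h"
    by (simp add: pcompose_diff[symmetric] k pcompose_mult)
  moreover have "f dvd pcompose f h" using pcompose_f by (simp add: cong_iff_dvd_diff)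
  ultimately have "[pcompose p h = pcompose q h] (mod f)" by (simp add: cong_iff_dvd_diff)
  then show ?thesis by (simp add: sg_def cong_def)
qed

lemma sg_mod: "sg (p mod f) = sg p" by (rule sg_cong) (simp add: cong_def)
lemma sg_0[simp]: "sg 0 = 0" by (simp add: sg_def)
lemma sg_add: "sg (p + q) = sg p + sg q" by (simp add: sg_def pcompose_add poly_mod_add_left)
lemma sg_diff: "sg (p - q) = sg p - sg q" by (simp add: sg_def pcompose_diff poly_mod_diff_left)
lemma sg_smult: "sg (smult c p) = smult c (sg p)" by (simp add: sg_def pcompose_smult mod_smult_left)
lemma sg_mult: "sg (p * q) = (sg p * sg q) mod f"
  by (simp add: sg_def pcompose_mult mod_mult_eq)
lemma deg_sg: "degree (sg p) < m"
  using degree_mod_less[OF f_nz, of "pcompose p h"] m_pos deg_f by (auto simp: sg_def)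
lemma sg_sum: "sg (sum g A) = (\<Sum>i\<in>A. sg (g i))"
  by (induct A rule: infinite_finite_induct) (simp_all add: sg_add)

lemma sg_monom: "i < m \<Longrightarrow> sg (monom c i) = smult c (tau i)"
proof -
  assume i: "i < m"
  have "sg (monom c i) = smult c (h ^ i mod f)"
    by (simp add: sg_def pcompose_monom mod_smult_left)
  also have "h ^ i mod f = tau i mod f" using hpow_cong[OF i] by (simp add: cong_def)
  also have "\<dots> = tau i" using deg_tau red_mod by blast
  finally show ?thesis .
qed

lemma coeff_tau: "coeff (tau i) u = (if i = 0 then (if u = 0 then 1 else 0) else if u = m - i then -s else 0)"
  by (simp add: tau_def coeff_monom)

lemma sum_monoms_m: "degree e < m \<Longrightarrow> e = (\<Sum>i<m. monom (coeff e i) i)"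
proof -
  assume "degree e < m"
  then have "degree e \<le> m - 1" by simp
  then have "e = (\<Sum>i\<le>m - 1. monom (coeff e i) i)" by (simp add: poly_as_sum_of_monoms')
  moreover have "{..m - 1} = {..<m}" using m_pos by auto
  ultimately show ?thesis by simp
qed

lemma coeff_sg: assumes "degree e < m"
  shows "coeff (sg e) u = (if u = 0 then coeff e 0 else if u < m then - s * coeff e (m - u) else 0)"
proof -
  have "sg e = (\<Sum>i<m. smult (coeff e i) (tau i))"
    by (subst sum_monoms_m[OF assms]) (simp add: sg_sum sg_monom)
  then have "coeff (sg e) u = (\<Sum>i<m. coeff e i * coeff (tau i) u)" by (simp add: coeff_sum)
  also have "\<dots> = (\<Sum>i<m. if i = (if u = 0 then 0 else m - u) then
        (if u = 0 then coeff e 0 else if u < m then - s * coeff e (m - u) else 0) else 0)"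
    by (rule sum.cong) (auto simp: coeff_tau)
  also have "\<dots> = (if u = 0 then coeff e 0 else if u < m then - s * coeff e (m - u) else 0)"
    using m_pos by (auto simp: sum.delta')
  finally show ?thesis .
qed

lemma sgsg: assumes "degree e < m" shows "sg (sg e) = e"
proof (rule poly_eqI)
  fix u
  show "coeff (sg (sg e)) u = coeff e u"
    using assms deg_sg[of e] ss
    by (auto simp: coeff_sg[OF deg_sg] coeff_sg[OF assms] coeff_eq_0)
qed


lemma mod_lowdeg: assumes "degree p < 2 * m"
  shows "coeff (p mod f) 0 = coeff p 0 - s * coeff p m"
proof -
  define q where "q = poly_cutoff m p - smult s (poly_shift m p)"
  have p: "p = poly_cutoff m p + monom 1 m * poly_shift m p"
    by (rule poly_eqI) (auto simp: coeff_poly_cutoff coeff_monom_mult coeff_poly_shift)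
  have "[poly_cutoff m p + monom 1 m * poly_shift m p = poly_cutoff m p + [:-s:] * poly_shift m p] (mod f)"
    by (intro cong_add cong_mult cong_refl Xm_cong)
  then have "[p = q] (mod f)" unfolding q_def using p by simp
  moreover have "degree q \<le> m - 1"
  proof (rule degree_le, intro allI impI)
    fix k assume "m - 1 < k"
    then have "k \<ge> m" by simp
    then have "coeff p (k + m) = 0" using assms by (intro coeff_eq_0) simp
    then show "coeff q k = 0" using \<open>k \<ge> m\<close> by (simp add: q_def coeff_poly_cutoff coeff_poly_shift)
  qed
  then have "degree q < m" using m_pos by simp
  ultimately have "p mod f = q" using red_mod by (metis cong_def)
  then show ?thesis by (simp add: q_def coeff_poly_cutoff coeff_poly_shift m_pos)
qed

lemma cst: assumes a: "degree a < m" and c: "degree c < m"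
  shows "coeff ((a * c) mod f) 0 = (\<Sum>u<m. coeff (sg a) u * coeff c u)"
proof -
  have "degree (a * c) < 2 * m" using a c degree_mult_le[of a c] by linarith
  then have 1: "coeff ((a * c) mod f) 0 = coeff a 0 * coeff c 0 - s * (\<Sum>i\<le>m. coeff a i * coeff c (m - i))"
    by (simp add: mod_lowdeg coeff_mult)
  have ins: "{..m} = insert 0 (insert m {1..<m})" using m_pos by auto
  have "(\<Sum>i\<le>m. coeff a i * coeff c (m - i)) = (\<Sum>i\<in>{1..<m}. coeff a i * coeff c (m - i))"
    using a c m_pos by (simp add: ins coeff_eq_0)
  also have "\<dots> = (\<Sum>u\<in>{1..<m}. coeff a (m - u) * coeff c u)"
    by (rule sum.reindex_bij_witness[where i="\<lambda>u. m - u" and j="\<lambda>u. m - u"]) auto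
  finally have 2: "(\<Sum>i\<le>m. coeff a i * coeff c (m - i)) = (\<Sum>u\<in>{1..<m}. coeff a (m - u) * coeff c u)" .
  have ins2: "{..<m} = insert 0 {1..<m}" using m_pos by auto
  have "(\<Sum>u<m. coeff (sg a) u * coeff c u) = coeff a 0 * coeff c 0 + (\<Sum>u\<in>{1..<m}. - s * (coeff a (m - u) * coeff c u))"
    by (simp add: ins2 coeff_sg[OF a] mult.assoc)
  also have "\<dots> = coeff a 0 * coeff c 0 - s * (\<Sum>u\<in>{1..<m}. coeff a (m - u) * coeff c u)"
    by (simp add: sum_distrib_left sum_negf)
  finally show ?thesis using 1 2 by simp
qed


definition ipm :: "nat \<Rightarrow> 'a poly list \<Rightarrow> 'a poly list \<Rightarrow> 'a" where
  "ipm l a c = (\<Sum>i<l. \<Sum>j<m. coeff (a ! i) j * coeff (c ! i) j)"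

lemma ipm_comm: "ipm l a c = ipm l c a" by (simp add: ipm_def mult.commute)

lemma Fdual_eq: "Fdual f l D = {a \<in> Avec f l. \<forall>c\<in>D. ipm l a c = 0}"
  by (simp add: Fdual_def ipm_def deg_f)

lemma Avec_iff: "v \<in> Avec f l \<longleftrightarrow> length v = l \<and> (\<forall>x\<in>set v. degree x < m)"
  by (simp add: Avec_def deg_f)

lemma Avec_nth: "v \<in> Avec f l \<Longrightarrow> i < l \<Longrightarrow> degree (v ! i) < m"
  by (auto simp: Avec_iff)

definition fl :: "nat \<Rightarrow> 'a poly list \<Rightarrow> nat \<times> nat \<Rightarrow> 'a" where
  "fl l v = (\<lambda>(i, j). if i < l \<and> j < m then coeff (v ! i) j else 0)"

lemma ipm_fl: "ipm l a c = (\<Sum>p\<in>{..<l} \<times> {..<m}. fl l a p * fl l c p)"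
  unfolding ipm_def sum.cartesian_product by (rule sum.cong) (auto simp: fl_def)

lemma fl_inj: assumes "a \<in> Avec f l" "c \<in> Avec f l" "fl l a = fl l c" shows "a = c"
proof (rule nth_equalityI)
  show "length a = length c" using assms by (simp add: Avec_iff)
  fix i assume "i < length a"
  then have i: "i < l" using assms by (simp add: Avec_iff)
  show "a ! i = c ! i"
  proof (rule poly_eqI)
    fix j
    show "coeff (a ! i) j = coeff (c ! i) j"
    proof (cases "j < m")
      case True
      then show ?thesis using fun_cong[OF assms(3), of "(i, j)"] i by (simp add: fl_def)
    next
      case False
      then show ?thesis using Avec_nth[OF assms(1) i] Avec_nth[OF assms(2) i] by (simp add: coeff_eq_0)
    qed
  qed
qed

lemma code_Avec: "A_code f l C \<Longrightarrow> C \<subseteq> Avec f l" by (simp add: A_code_def)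
lemma code_smul: "A_code f l C \<Longrightarrow> degree a < m \<Longrightarrow> v \<in> C \<Longrightarrow> map (\<lambda>y. (a * y) mod f) v \<in> C"
  by (simp add: A_code_def deg_f)
lemma code_add: "A_code f l C \<Longrightarrow> u \<in> C \<Longrightarrow> v \<in> C \<Longrightarrow> map2 (+) u v \<in> C"
  by (simp add: A_code_def)
lemma code_0: "A_code f l C \<Longrightarrow> replicate l 0 \<in> C"
  by (simp add: A_code_def)

lemma DD: assumes C: "A_code f l C" shows "Fdual f l (Fdual f l C) = C"
proof
  show "C \<subseteq> Fdual f l (Fdual f l C)"
    using code_Avec[OF C] by (auto simp: Fdual_eq ipm_comm)
next
  show "Fdual f l (Fdual f l C) \<subseteq> C"
  proof
    fix b0 assume b0: "b0 \<in> Fdual f l (Fdual f l C)"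
    have b0A: "b0 \<in> Avec f l" using b0 by (simp add: Fdual_eq)
    define I where "I = {..<l} \<times> {..<m}"
    have "fl l b0 \<in> fl l ` C"
    proof (rule double_perp[of I])
      show "finite I" by (simp add: I_def)
      show "\<forall>v\<in>fl l ` C. \<forall>i. i \<notin> I \<longrightarrow> v i = 0" by (auto simp: I_def fl_def)
      show "\<forall>i. i \<notin> I \<longrightarrow> fl l b0 i = 0" by (auto simp: I_def fl_def)
      have "replicate l 0 \<in> C" using C by (simp add: A_code_def)
      moreover have "fl l (replicate l 0) = (\<lambda>_. 0)" by (auto simp: fl_def)
      ultimately show "(\<lambda>_. 0) \<in> fl l ` C" by (intro rev_image_eqI[of "replicate l 0"]) simp_all
      show "\<forall>u\<in>fl l ` C. \<forall>v\<in>fl l ` C. (\<lambda>i. u i + v i) \<in> fl l ` C"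
      proof (intro ballI)
        fix u v assume "u \<in> fl l ` C" "v \<in> fl l ` C"
        then obtain u0 v0 where uv: "u0 \<in> C" "v0 \<in> C" "u = fl l u0" "v = fl l v0" by auto
        then have "map2 (+) u0 v0 \<in> C" using C by (simp add: A_code_def)
        moreover have "length u0 = l" "length v0 = l" using uv code_Avec[OF C] by (auto simp: Avec_iff)
        then have "fl l (map2 (+) u0 v0) = (\<lambda>i. u i + v i)" using uv by (auto simp: fl_def)
        ultimately show "(\<lambda>i. u i + v i) \<in> fl l ` C" by (intro rev_image_eqI[of "map2 (+) u0 v0"]) simp_all
      qed
      show "\<forall>c. \<forall>v\<in>fl l ` C. (\<lambda>i. c * v i) \<in> fl l ` C"
      proof (intro allI ballI)
        fix c :: 'a and v assume "v \<in> fl l ` C"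
        then obtain v0 where v: "v0 \<in> C" "v = fl l v0" by auto
        have "map (\<lambda>y. ([:c:] * y) mod f) v0 \<in> C" using code_smul[OF C _ v(1), of "[:c:]"] m_pos by simp
        moreover have "fl l (map (\<lambda>y. ([:c:] * y) mod f) v0) = (\<lambda>i. c * v i)"
        proof -
          have "v0 \<in> Avec f l" using v code_Avec[OF C] by auto
          then have "\<And>i. i < l \<Longrightarrow> ([:c:] * v0 ! i) mod f = smult c (v0 ! i)"
            using Avec_nth red_mod degree_smult_le le_less_trans by (simp add: mod_smult_left)
          moreover have "length v0 = l" using \<open>v0 \<in> Avec f l\<close> by (simp add: Avec_iff)
          ultimately show ?thesis using v by (auto simp: fl_def)
        qed
        ultimately show "(\<lambda>i. c * v i) \<in> fl l ` C" by (intro rev_image_eqI[of "map (\<lambda>y. ([:c:] * y) mod f) v0"]) simp_all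
      qed
      show "\<forall>w. (\<forall>v\<in>fl l ` C. (\<Sum>i\<in>I. w i * v i) = 0) \<longrightarrow> (\<Sum>i\<in>I. w i * fl l b0 i) = 0"
      proof (intro allI impI)
        fix w assume w: "\<forall>v\<in>fl l ` C. (\<Sum>i\<in>I. w i * v i) = 0"
        define W where "W = map (\<lambda>i. \<Sum>j<m. monom (w (i, j)) j) [0..<l]"
        have cW: "i < l \<Longrightarrow> coeff (W ! i) j = (if j < m then w (i, j) else 0)" for i j
          by (simp add: W_def coeff_sum coeff_monom)
        have WA: "W \<in> Avec f l"
          unfolding Avec_iff
        proof (intro conjI ballI)
          show "length W = l" by (simp add: W_def)
          fix x assume "x \<in> set W"
          then obtain i where i: "i < l" "x = W ! i" by (auto simp: in_set_conv_nth W_def)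
          have "degree x \<le> m - 1" by (rule degree_le) (use i cW in auto)
          then show "degree x < m" using m_pos by simp
        qed
        have flW: "p \<in> I \<Longrightarrow> fl l W p = w p" for p by (auto simp: fl_def I_def cW)
        have "W \<in> Fdual f l C"
        proof -
          have "ipm l W c = 0" if "c \<in> C" for c
          proof -
            have "ipm l W c = (\<Sum>p\<in>I. w p * fl l c p)" unfolding ipm_fl I_def[symmetric]
              by (rule sum.cong) (simp_all add: flW)
            then show ?thesis using w that by auto
          qed
          then show ?thesis using WA by (simp add: Fdual_eq)
        qed
        then have "ipm l b0 W = 0" using b0 by (simp add: Fdual_eq)
        then have "(\<Sum>p\<in>I. fl l b0 p * w p) = 0" unfolding ipm_fl I_def[symmetric]
          by (metis (no_types, lifting) flW sum.cong)
        then show "(\<Sum>i\<in>I. w i * fl l b0 i) = 0" by (simp add: mult.commute)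
      qed
    qed
    then obtain c where c: "c \<in> C" "fl l c = fl l b0" by auto
    then have "c = b0" using fl_inj b0A code_Avec[OF C] by blast
    then show "b0 \<in> C" using c by simp
  qed
qed


definition smap :: "'a poly list \<Rightarrow> 'a poly list" where "smap v = map sg v"

lemma smap_Avec: "v \<in> Avec f l \<Longrightarrow> smap v \<in> Avec f l"
  by (auto simp: Avec_iff smap_def deg_sg)

lemma smap_smap: "v \<in> Avec f l \<Longrightarrow> smap (smap v) = v"
  by (auto simp: Avec_iff smap_def sgsg intro!: map_idI)

lemma mod_sum_poly: "(\<Sum>i\<in>A. g i) mod f = (\<Sum>i\<in>A. g i mod f)"
  by (induct A rule: infinite_finite_induct) (simp_all add: poly_mod_add_left)

lemma ip_sg: assumes a: "a \<in> Avec f l" and c: "c \<in> Avec f l"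
  shows "ipm l (smap a) c = coeff ((\<Sum>i<l. a ! i * c ! i) mod f) 0"
proof -
  have la: "length a = l" using a by (simp add: Avec_iff)
  have "ipm l (smap a) c = (\<Sum>i<l. coeff ((a ! i * c ! i) mod f) 0)"
    unfolding ipm_def
    by (rule sum.cong) (simp_all add: smap_def la cst Avec_nth[OF a] Avec_nth[OF c])
  also have "\<dots> = coeff ((\<Sum>i<l. a ! i * c ! i) mod f) 0"
    by (simp add: mod_sum_poly coeff_sum)
  finally show ?thesis .
qed

lemma ipm_selfadj: assumes a: "a \<in> Avec f l" and c: "c \<in> Avec f l"
  shows "ipm l a (smap c) = ipm l (smap a) c"
proof -
  have la: "length a = l" and lc: "length c = l" using a c by (simp_all add: Avec_iff)
  have "(\<Sum>j<m. coeff (a ! i) j * coeff (sg (c ! i)) j) = (\<Sum>j<m. coeff (sg (a ! i)) j * coeff (c ! i) j)"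
    if i: "i < l" for i
  proof -
    have e: "coeff ((c ! i * a ! i) mod f) 0 = (\<Sum>u<m. coeff (sg (c ! i)) u * coeff (a ! i) u)"
      by (rule cst) (simp_all add: Avec_nth[OF a i] Avec_nth[OF c i])
    have "(\<Sum>j<m. coeff (a ! i) j * coeff (sg (c ! i)) j) = coeff ((c ! i * a ! i) mod f) 0"
      unfolding e by (simp add: mult.commute)
    also have "\<dots> = coeff ((a ! i * c ! i) mod f) 0" by (simp add: mult.commute)
    also have "\<dots> = (\<Sum>j<m. coeff (sg (a ! i)) j * coeff (c ! i) j)"
      by (simp add: cst Avec_nth[OF a i] Avec_nth[OF c i])
    finally show ?thesis .
  qed
  note key = this
  show ?thesis unfolding ipm_def smap_def by (rule sum.cong) (simp_all add: la lc key)
qed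

lemma mod_deg: "degree (p mod f) < m \<or> p mod f = 0"
  using degree_mod_less[OF f_nz, of p] deg_f by auto

lemma red_mod': "degree (p mod f) < m"
  using mod_deg[of p] m_pos by auto

lemma dual_iff: assumes C: "A_code f l C" and a: "a \<in> Avec f l"
  shows "a \<in> dual f l C \<longleftrightarrow> smap a \<in> Fdual f l C"
proof
  assume "a \<in> dual f l C"
  then have "\<forall>c\<in>C. (\<Sum>i<l. a ! i * c ! i) mod f = 0" by (simp add: dual_def)
  then show "smap a \<in> Fdual f l C"
    using code_Avec[OF C] a by (auto simp: Fdual_eq smap_Avec ip_sg)
next
  assume sa: "smap a \<in> Fdual f l C"
  have "(\<Sum>i<l. a ! i * c ! i) mod f = 0" if c: "c \<in> C" for c
  proof -
    define H where "H = (\<Sum>i<l. a ! i * c ! i) mod f"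
    have cA: "c \<in> Avec f l" using c code_Avec[OF C] by auto
    have lc: "length c = l" using cA by (simp add: Avec_iff)
    have "coeff (sg H) j = 0" for j
    proof (cases "j < m")
      case False then show ?thesis using deg_sg[of H] by (simp add: coeff_eq_0)
    next
      case True
      define c' where "c' = map (\<lambda>y. (monom 1 j * y) mod f) c"
      have c'C: "c' \<in> C" unfolding c'_def using True by (intro code_smul[OF C _ c]) (simp add: degree_monom_eq)
      then have "ipm l (smap a) c' = 0" using sa by (simp add: Fdual_eq)
      then have z: "coeff ((\<Sum>i<l. a ! i * c' ! i) mod f) 0 = 0"
        using ip_sg[OF a] c'C code_Avec[OF C] by auto
      have "[(\<Sum>i<l. a ! i * c' ! i) = (\<Sum>i<l. a ! i * (monom 1 j * c ! i))] (mod f)"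
        by (rule cong_sum) (simp add: c'_def lc cong_def mod_mult_right_eq)
      moreover have "(\<Sum>i<l. a ! i * (monom 1 j * c ! i)) = (\<Sum>i<l. a ! i * c ! i) * monom 1 j"
        by (subst sum_distrib_right) (simp add: mult_ac)
      moreover have "[(\<Sum>i<l. a ! i * c ! i) * monom 1 j = H * monom 1 j] (mod f)"
        by (simp add: H_def cong_def mod_mult_left_eq)
      ultimately have "[(\<Sum>i<l. a ! i * c' ! i) = H * monom 1 j] (mod f)"
        using cong_trans by simp
      then have "coeff ((H * monom 1 j) mod f) 0 = 0" using z by (simp add: cong_def)
      moreover have "coeff ((H * monom 1 j) mod f) 0 = (\<Sum>u<m. coeff (sg H) u * coeff (monom 1 j) u)"
        using True by (intro cst) (simp_all add: H_def red_mod' degree_monom_eq)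
      moreover have "(\<Sum>u<m. coeff (sg H) u * coeff (monom 1 j) u) = coeff (sg H) j"
        using True by (simp add: coeff_monom if_distrib sum.delta cong: if_cong)
      ultimately show ?thesis by simp
    qed
    then have "sg H = 0" by (simp add: poly_eq_iff)
    then have "sg (sg H) = 0" by simp
    then show ?thesis using sgsg[OF red_mod'] by (simp add: H_def)
  qed
  then show "a \<in> dual f l C" using a by (simp add: dual_def)
qed

lemma dual_Avec: "dual f l C \<subseteq> Avec f l" by (auto simp: dual_def)

lemma Fdd: assumes C: "A_code f l C" shows "Fdual f l (dual f l C) = smap ` C"
proof
  show "Fdual f l (dual f l C) \<subseteq> smap ` C"
  proof
    fix b assume b: "b \<in> Fdual f l (dual f l C)"
    have bA: "b \<in> Avec f l" using b by (simp add: Fdual_eq)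
    have "smap b \<in> Fdual f l (Fdual f l C)"
    proof -
      have "ipm l (smap b) a' = 0" if a': "a' \<in> Fdual f l C" for a'
      proof -
        have a'A: "a' \<in> Avec f l" using a' by (simp add: Fdual_eq)
        have "smap a' \<in> dual f l C" using dual_iff[OF C smap_Avec[OF a'A]] smap_smap[OF a'A] a' by simp
        then have "ipm l b (smap a') = 0" using b by (simp add: Fdual_eq)
        then show ?thesis using ipm_selfadj[OF bA a'A] by simp
      qed
      then show ?thesis using smap_Avec[OF bA] by (simp add: Fdual_eq)
    qed
    then have "smap b \<in> C" using DD[OF C] by simp
    then show "b \<in> smap ` C" using smap_smap[OF bA] by (intro rev_image_eqI[of "smap b"]) simp_all
  qed
next
  show "smap ` C \<subseteq> Fdual f l (dual f l C)"
  proof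
    fix b assume "b \<in> smap ` C"
    then obtain c where c: "c \<in> C" "b = smap c" by auto
    have cA: "c \<in> Avec f l" using c code_Avec[OF C] by auto
    have "ipm l b a = 0" if a: "a \<in> dual f l C" for a
    proof -
      have aA: "a \<in> Avec f l" using a dual_Avec by auto
      have "smap a \<in> Fdual f l C" using dual_iff[OF C aA] a by simp
      moreover have "c \<in> Fdual f l (Fdual f l C)" using DD[OF C] c by simp
      ultimately have "ipm l c (smap a) = 0" by (simp add: Fdual_eq)
      then show ?thesis using ipm_selfadj[OF cA aA] c by simp
    qed
    then show "b \<in> Fdual f l (dual f l C)" using c smap_Avec[OF cA] by (simp add: Fdual_eq)
  qed
qed


lemma code_seq_closed:
  assumes C: "A_code f l C"
  shows "(\<forall>u\<in>code_seq C j. \<forall>v\<in>code_seq C j. map2 (+) u v \<in> code_seq C j) \<and>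
         (\<forall>a v. degree a < m \<longrightarrow> v \<in> code_seq C j \<longrightarrow> map (\<lambda>y. (a * y) mod f) v \<in> code_seq C j)"
proof (induct j)
  case 0
  then show ?case using code_add[OF C] code_smul[OF C] by auto
next
  case (Suc j)
  let ?Y = "code_seq C j"
  have XA: "?Y \<subseteq> Avec f l" using code_seq_sub code_Avec[OF C] by blast
  show ?case
  proof (intro conjI ballI allI impI)
    fix u v assume u: "u \<in> code_seq C (Suc j)" and v: "v \<in> code_seq C (Suc j)"
    then have "u \<in> ?Y" "v \<in> ?Y" "Lind_code ?Y < Lind u" "Lind_code ?Y < Lind v" by auto
    moreover have "u \<in> Avec f l" "v \<in> Avec f l" using XA \<open>u \<in> ?Y\<close> \<open>v \<in> ?Y\<close> by auto
    then have "length u = length v" by (simp add: Avec_iff)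
    ultimately have "Lind_code ?Y < min (Lind u) (Lind v)" "min (Lind u) (Lind v) \<le> Lind (map2 (+) u v)"
      "map2 (+) u v \<in> ?Y"
      using Suc Lind_add[of u v] by auto
    then show "map2 (+) u v \<in> code_seq C (Suc j)" using less_le_trans[of "Lind_code ?Y" "min (Lind u) (Lind v)" "Lind (map2 (+) u v)"] by simp
  next
    fix a :: "'a poly" and v assume a: "degree a < m" and v: "v \<in> code_seq C (Suc j)"
    then have "v \<in> ?Y" "Lind_code ?Y < Lind v" by auto
    moreover have "Lind v \<le> Lind (map (\<lambda>y. (a * y) mod f) v)" by (rule Lind_map_ge) simp
    ultimately show "map (\<lambda>y. (a * y) mod f) v \<in> code_seq C (Suc j)"
      using Suc a by auto
  qed
qed

lemma sg_eq0: "degree x < m \<Longrightarrow> sg x = 0 \<longleftrightarrow> x = 0"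
  by (metis sg_0 sgsg)

lemma Lind_smap: "v \<in> Avec f l \<Longrightarrow> Lind (smap v) = Lind v"
  unfolding smap_def by (rule Lind_map) (auto simp: Avec_iff sg_eq0)

lemma Lcoef_smap: "v \<in> Avec f l \<Longrightarrow> Lcoef (smap v) = sg (Lcoef v)"
  unfolding smap_def by (rule Lcoef_map) (auto simp: Avec_iff sg_eq0)

lemma Lind_code_smap: "Y \<subseteq> Avec f l \<Longrightarrow> Lind_code (smap ` Y) = Lind_code Y"
  unfolding Lind_code_def image_image
  by (rule INF_cong) (auto simp: Lind_smap)

lemma code_seq_smap: "C \<subseteq> Avec f l \<Longrightarrow> code_seq (smap ` C) j = smap ` code_seq C j"
proof (induct j)
  case 0 then show ?case by simp
next
  case (Suc j)
  have XA: "code_seq C j \<subseteq> Avec f l" using code_seq_sub Suc(2) by blast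
  have LS: "\<forall>c\<in>code_seq C j. Lind (smap c) = Lind c" using XA Lind_smap by blast
  have "code_seq (smap ` C) (Suc j) = {c \<in> smap ` code_seq C j. Lind_code (code_seq C j) < Lind c}"
    using Suc Lind_code_smap[OF XA] by simp
  also have "\<dots> = smap ` {c \<in> code_seq C j. Lind_code (code_seq C j) < Lind c}"
    using LS by auto
  finally show ?case by simp
qed

lemma nonzero_smap: assumes "Y \<subseteq> Avec f l" shows "nonzero_code (smap ` Y) = nonzero_code Y"
proof -
  have LS: "\<forall>c\<in>Y. Lind (smap c) = Lind c" using assms Lind_smap by blast
  show ?thesis
  proof
    assume "nonzero_code (smap ` Y)"
    then obtain c where "c \<in> Y" "Lind (smap c) \<noteq> \<infinity>" by (auto simp: nonzero_code_def)
    then show "nonzero_code Y" using LS by (auto simp: nonzero_code_def)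
  next
    assume "nonzero_code Y"
    then obtain c where "c \<in> Y" "Lind c \<noteq> \<infinity>" by (auto simp: nonzero_code_def)
    then have "smap c \<in> smap ` Y" "Lind (smap c) \<noteq> \<infinity>" using LS by auto
    then show "nonzero_code (smap ` Y)" unfolding nonzero_code_def by blast
  qed
qed

lemma xinv_eq: "xinv f = h"
  unfolding xinv_def
proof (rule the_equality)
  have dh: "degree h < m" using m_pos by (simp add: h_def degree_monom_le le_less_trans[OF degree_monom_le])
  then show "degree h < degree f \<and> [:0, 1:] * h mod f = 1"
    using Xh_cong m_pos by (simp add: deg_f cong_def X_def red_mod)
  fix h' assume h': "degree h' < degree f \<and> [:0, 1:] * h' mod f = 1"
  then have "[X ^ 1 * h' = X ^ 1 * h] (mod f)"
    using Xh_cong m_pos by (simp add: cong_def X_def red_mod)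
  then have "[h' = h] (mod f)" by (rule cancel_X)
  then show "h' = h" using h' dh by (simp add: cong_def red_mod deg_f)
qed

lemma refl_cong: assumes p: "degree p < m"
  shows "(monom 1 (degree p) * sg p) mod f = reflect_poly p"
proof -
  define d where "d = degree p"
  have "pcompose p h = (\<Sum>i\<le>d. smult (coeff p i) (h ^ i))"
    by (subst poly_as_sum_of_monoms[symmetric]) (simp add: d_def pcompose_sum pcompose_monom)
  then have e1: "monom 1 d * pcompose p h = (\<Sum>i\<le>d. smult (coeff p i) (monom 1 (d - i) * (X ^ i * h ^ i)))"
    by (simp add: sum_distrib_left Xpow mult_monom mult.assoc[symmetric])
  have "[(\<Sum>i\<le>d. smult (coeff p i) (monom 1 (d - i) * (X ^ i * h ^ i))) =
         (\<Sum>i\<le>d. smult (coeff p i) (monom 1 (d - i) * 1))] (mod f)"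
  proof (rule cong_sum)
    fix i
    have "[X ^ i * h ^ i = 1] (mod f)"
      using cong_pow[OF Xh_cong, of i] by (simp add: power_mult_distrib)
    from cong_mult[OF cong_refl[of "[:coeff p i:] * monom 1 (d - i)"] this]
    show "[smult (coeff p i) (monom 1 (d - i) * (X ^ i * h ^ i)) = smult (coeff p i) (monom 1 (d - i) * 1)] (mod f)"
      by (simp add: mult.assoc)
  qed
  then have c1: "[monom 1 d * pcompose p h = (\<Sum>i\<le>d. monom (coeff p i) (d - i))] (mod f)"
    unfolding e1 by (simp add: smult_monom)
  have c2: "reflect_poly p = (\<Sum>i\<le>d. monom (coeff p i) (d - i))"
  proof (rule poly_eqI)
    fix n
    show "coeff (reflect_poly p) n = coeff (\<Sum>i\<le>d. monom (coeff p i) (d - i)) n"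
    proof (cases "n \<le> d")
      case True
      have "coeff (\<Sum>i\<le>d. monom (coeff p i) (d - i)) n = (\<Sum>i\<le>d. if i = d - n then coeff p i else 0)"
        unfolding coeff_sum by (rule sum.cong) (use True in \<open>auto simp: coeff_monom\<close>)
      also have "\<dots> = coeff p (d - n)" by simp
      finally show ?thesis using True by (simp add: coeff_reflect_poly d_def)
    next
      case False
      have "coeff (\<Sum>i\<le>d. monom (coeff p i) (d - i)) n = 0"
        unfolding coeff_sum by (rule sum.neutral) (use False in \<open>auto simp: coeff_monom\<close>)
      then show ?thesis using False by (simp add: coeff_reflect_poly d_def)
    qed
  qed
  have "(monom 1 d * sg p) mod f = (monom 1 d * pcompose p h) mod f"
    by (simp add: sg_def mod_mult_right_eq)
  also have "\<dots> = reflect_poly p mod f" using c1 c2 by (simp add: cong_def)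
  also have "\<dots> = reflect_poly p" using p degree_reflect_poly_le[of p] by (simp add: red_mod)
  finally show ?thesis by (simp add: d_def)
qed

lemma reflect_f: "reflect_poly f = smult s f"
proof (rule poly_eqI)
  fix n
  have cf: "coeff f k = (if k = m then 1 else 0) + (if k = 0 then s else 0)" for k
    by (simp add: f_def coeff_monom coeff_pCons split: nat.split)
  show "coeff (reflect_poly f) n = coeff (smult s f) n"
    using m_pos ss by (auto simp: coeff_reflect_poly deg_f cf)
qed


lemma lead_transfer:
  assumes YA: "Y \<subseteq> Avec f l"
    and Yadd: "\<forall>u\<in>Y. \<forall>v\<in>Y. map2 (+) u v \<in> Y"
    and Ysm: "\<forall>a v. degree a < m \<longrightarrow> v \<in> Y \<longrightarrow> map (\<lambda>y. (a * y) mod f) v \<in> Y"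
    and nz: "nonzero_code Y"
    and le: "leading_element Y g"
  shows "leading_element (smap ` Y) (recip_row f g)"
proof -
  define L where "L = Lind_code Y"
  define g0 where "g0 = Lcoef g"
  have gY: "g \<in> Y" and gL: "Lind g = L" and isl: "is_Lcoef_code Y g0"
    using le by (auto simp: leading_element_def L_def g0_def)
  have g0m: "lead_coeff g0 = 1"
    and mind: "\<forall>c\<in>Y. Lind c = L \<and> lead_coeff (Lcoef c) = 1 \<longrightarrow> degree g0 \<le> degree (Lcoef c)"
    using isl by (auto simp: is_Lcoef_code_def L_def)
  obtain c1 where c1: "c1 \<in> Y" "Lind c1 \<noteq> \<infinity>" using nz by (auto simp: nonzero_code_def)
  have "L \<noteq> \<infinity>"
  proof
    assume "L = \<infinity>"
    then have "\<infinity> \<le> Lind c1" using Lind_code_le[OF c1(1)] by (simp add: L_def)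
    then show False using c1(2) by simp
  qed
  then obtain p where Lp: "L = enat p" by (cases L) auto
  have gA: "g \<in> Avec f l" using gY YA by auto
  have lg: "length g = l" using gA by (simp add: Avec_iff)
  have gp: "p < l" "g ! p \<noteq> 0" using gL Lp Lind_eq_enat[of g p] lg by auto
  have g0p: "g0 = g ! p" using gL Lp Lcoef_at by (simp add: g0_def)
  have dg0: "degree g0 < m" using Avec_nth[OF gA gp(1)] g0p by simp
  have g0nz: "g0 \<noteq> 0" using g0m by auto
  define d where "d = degree g0"
  have vlen: "v \<in> Y \<Longrightarrow> length v = l" for v using YA by (auto simp: Avec_iff)
  have vdeg: "v \<in> Y \<Longrightarrow> degree (v ! p) < m" for v using YA Avec_nth gp(1) by blast
  have low: "v \<in> Y \<Longrightarrow> q < p \<Longrightarrow> v ! q = 0" for v q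
  proof (rule ccontr)
    assume v: "v \<in> Y" "q < p" "v ! q \<noteq> 0"
    have "enat p \<le> Lind v" using Lind_code_le[OF v(1)] Lp by (simp add: L_def)
    then have "enat p \<le> enat q" using v vlen[OF v(1)] gp(1) Lind_ge_iff[of "enat p" v] by auto
    then show False using v(2) by simp
  qed
  have atp: "v \<in> Y \<Longrightarrow> v ! p \<noteq> 0 \<Longrightarrow> Lind v = L \<and> Lcoef v = v ! p" for v
  proof -
    assume v: "v \<in> Y" "v ! p \<noteq> 0"
    then have "Lind v = enat p" using Lind_eq_enat[of v p] vlen[OF v(1)] gp(1) low by auto
    then show ?thesis using Lp Lcoef_at by auto
  qed
  have mindeg: "v \<in> Y \<Longrightarrow> v ! p \<noteq> 0 \<Longrightarrow> d \<le> degree (v ! p)" for v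
  proof -
    assume v: "v \<in> Y" "v ! p \<noteq> 0"
    define a where "a = inverse (lead_coeff (v ! p))"
    have a0: "a \<noteq> 0" using v by (simp add: a_def)
    define w where "w = map (\<lambda>y. ([:a:] * y) mod f) v"
    have wY: "w \<in> Y" using Ysm[rule_format, of "[:a:]" v] m_pos v(1) unfolding w_def by simp
    have wp: "w ! p = smult a (v ! p)"
      using vlen[OF v(1)] gp(1) vdeg[OF v(1)] by (simp add: w_def red_mod le_less_trans[OF degree_smult_le])
    then have "w ! p \<noteq> 0" using a0 v(2) by simp
    then have "Lind w = L" "Lcoef w = smult a (v ! p)" using atp[OF wY] wp by auto
    moreover have "lead_coeff (smult a (v ! p)) = 1" using v(2) by (simp add: a_def lead_coeff_smult)
    ultimately have "degree g0 \<le> degree (smult a (v ! p))" using mind wY by auto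
    then show ?thesis using a0 by (simp add: d_def)
  qed
  have red_step: "degree q < m \<Longrightarrow> (- (q div g0) * g0) mod f = q mod g0 - q" for q
  proof -
    assume q: "degree q < m"
    have "- (q div g0) * g0 = q mod g0 - q" using div_mult_mod_eq[of q g0] by (simp add: algebra_simps)
    moreover have "degree (q mod g0 - q) < m"
    proof -
      have "degree (q mod g0) < m" using degree_mod_less[OF g0nz, of q] dg0 m_pos by auto
      then show ?thesis using q degree_diff_le_max[of "q mod g0" q] by simp
    qed
    ultimately show ?thesis by (simp add: red_mod)
  qed
  have rdeg: "q mod g0 \<noteq> 0 \<Longrightarrow> degree (q mod g0) < d" for q
    using degree_mod_less[OF g0nz, of q] by (auto simp: d_def)
  have g0f: "g0 dvd f"
  proof (rule ccontr)
    assume nd: "\<not> g0 dvd f"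
    define b where "b = (- (f div g0)) mod f"
    define w where "w = map (\<lambda>y. (b * y) mod f) g"
    have wY: "w \<in> Y" unfolding w_def b_def by (rule Ysm[rule_format, OF red_mod' gY])
    have "w ! p = (b * g0) mod f" using lg gp(1) by (simp add: w_def g0p)
    also have "\<dots> = (- (f div g0) * g0) mod f" by (simp add: b_def mod_mult_left_eq)
    also have "\<dots> = f mod g0 - f mod f"
    proof -
      have e: "- (f div g0) * g0 = f mod g0 - f" using div_mult_mod_eq[of f g0] by (simp add: algebra_simps)
      have "(f mod g0) mod f = f mod g0"
        using degree_mod_less[OF g0nz, of f] dg0 by (auto simp: red_mod)
      then show ?thesis by (simp only: e poly_mod_diff_left)
    qed
    also have "\<dots> = f mod g0"
      using degree_mod_less[OF g0nz, of f] dg0 by (auto simp: red_mod)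
    finally have wp: "w ! p = f mod g0" .
    have nz: "f mod g0 \<noteq> 0" using nd by (simp add: mod_eq_0_iff_dvd)
    have "d \<le> degree (w ! p)" using mindeg[OF wY] wp nz by simp
    moreover have "degree (w ! p) < d" using rdeg[OF nz] wp by simp
    ultimately show False by simp
  qed
  have g0dvd: "v \<in> Y \<Longrightarrow> g0 dvd v ! p" for v
  proof (rule ccontr)
    assume v: "v \<in> Y" and nd: "\<not> g0 dvd v ! p"
    define q where "q = v ! p"
    define b where "b = (- (q div g0)) mod f"
    define w where "w = map2 (+) v (map (\<lambda>y. (b * y) mod f) g)"
    have "map (\<lambda>y. (b * y) mod f) g \<in> Y" unfolding b_def by (rule Ysm[rule_format, OF red_mod' gY])
    then have wY: "w \<in> Y" unfolding w_def using Yadd v by blast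
    have "w ! p = q + (b * g0) mod f" using lg gp(1) vlen[OF v] by (simp add: w_def g0p q_def)
    also have "(b * g0) mod f = (- (q div g0) * g0) mod f" by (simp add: b_def mod_mult_left_eq)
    also have "\<dots> = q mod g0 - q" using red_step vdeg[OF v] by (simp add: q_def)
    finally have wp: "w ! p = q mod g0" by simp
    have nz: "q mod g0 \<noteq> 0" using nd by (simp add: mod_eq_0_iff_dvd q_def)
    have "d \<le> degree (w ! p)" using mindeg[OF wY] wp nz by simp
    moreover have "degree (w ! p) < d" using rdeg[OF nz] wp by simp
    ultimately show False by simp
  qed
  define \<alpha> where "\<alpha> = coeff g0 0"
  have \<alpha>0: "\<alpha> \<noteq> 0"
  proof -
    obtain k where "f = g0 * k" using g0f by auto
    then have "coeff f 0 = \<alpha> * coeff k 0" by (simp add: \<alpha>_def coeff_mult_0)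
    then show ?thesis using coeff_f0 s_nz by auto
  qed
  have reflg: "(monom 1 d * sg g0) mod f = reflect_poly g0" using refl_cong[OF dg0] by (simp add: d_def)
  have deg_rg: "degree (reflect_poly g0) = d" using \<alpha>0 by (simp add: \<alpha>_def d_def)
  have lc_rg: "lead_coeff (reflect_poly g0) = \<alpha>"
    using deg_rg by (simp add: coeff_reflect_poly \<alpha>_def d_def)
  define g0s where "g0s = smult (inverse \<alpha>) (reflect_poly g0)"
  have g0s_m: "lead_coeff g0s = 1" using \<alpha>0 lc_rg by (simp add: g0s_def lead_coeff_smult)
  have deg_g0s: "degree g0s = d" using \<alpha>0 deg_rg by (simp add: g0s_def)
  have rdvd: "reflect_poly g0 dvd f"
  proof -
    obtain k where "f = g0 * k" using g0f by auto
    then have "reflect_poly f = reflect_poly g0 * reflect_poly k" by (simp add: reflect_poly_mult)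
    then have "reflect_poly g0 dvd reflect_poly f" by simp
    then have "reflect_poly g0 dvd smult s f" using reflect_f by simp
    then show ?thesis using s_nz dvd_smult_cancel by blast
  qed
  define \<phi> where "\<phi> = (\<lambda>e. smult (inverse \<alpha>) ((monom 1 d * sg e) mod f))"
  have rr: "recip_row f g = map \<phi> g"
    by (simp add: recip_row_def Let_def xinv_eq g0_def[symmetric] d_def \<alpha>_def[symmetric] \<phi>_def sg_def mod_mult_right_eq)
  have \<phi>0: "\<phi> 0 = 0" by (simp add: \<phi>_def)
  have \<phi>inj: "\<forall>x\<in>set g. \<phi> x = 0 \<longleftrightarrow> x = 0"
  proof (intro ballI iffI)
    fix x assume x: "x \<in> set g" and z: "\<phi> x = 0"
    have dx: "degree x < m" using x gA by (simp add: Avec_iff)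
    have "(monom 1 d * sg x) mod f = 0" using z \<alpha>0 by (simp add: \<phi>_def)
    then have "f dvd X ^ d * sg x" by (simp add: Xpow mod_eq_0_iff_dvd)
    then have "f dvd sg x" by (rule cancel_X_dvd)
    then have "sg x = 0" using dvd_imp_degree_le[of f "sg x"] deg_sg[of x] deg_f by fastforce
    then show "x = 0" using sg_eq0[OF dx] by simp
  qed (simp add: \<phi>0)
  have Lr: "Lind (recip_row f g) = L" using Lind_map[OF \<phi>inj] gL rr by simp
  have Cr: "Lcoef (recip_row f g) = g0s"
    using Lcoef_map[OF \<phi>inj \<phi>0] rr reflg by (simp add: g0_def[symmetric] \<phi>_def g0s_def)
  have In: "recip_row f g \<in> smap ` Y"
  proof -
    define \<beta> where "\<beta> = smult (inverse \<alpha>) (sg (monom 1 d))"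
    have d\<beta>: "degree \<beta> < m" using deg_sg le_less_trans[OF degree_smult_le] m_pos by (simp add: \<beta>_def)
    define w where "w = map (\<lambda>y. (\<beta> * y) mod f) g"
    have wY: "w \<in> Y" unfolding w_def by (rule Ysm[rule_format, OF d\<beta> gY])
    have dmon: "degree (monom (1::'a) d) < m" using dg0 by (simp add: d_def degree_monom_eq)
    have "smap w = map \<phi> g"
      unfolding smap_def w_def map_map
    proof (rule map_cong[OF refl])
      fix y assume "y \<in> set g"
      have "sg ((\<beta> * y) mod f) = (sg \<beta> * sg y) mod f" by (simp add: sg_mod sg_mult)
      also have "sg \<beta> = smult (inverse \<alpha>) (monom 1 d)" by (simp add: \<beta>_def sg_smult sgsg[OF dmon])
      finally show "(sg \<circ> (\<lambda>y. (\<beta> * y) mod f)) y = \<phi> y" by (simp add: \<phi>_def mod_smult_left)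
    qed
    then show ?thesis using rr wY by (intro rev_image_eqI[of w]) simp_all
  qed
  have LcY: "Lind_code (smap ` Y) = L" using Lind_code_smap[OF YA] by (simp add: L_def)
  have minimal: "\<forall>c\<in>smap ` Y. Lind c = L \<and> lead_coeff (Lcoef c) = 1 \<longrightarrow> degree g0s \<le> degree (Lcoef c)"
  proof (intro ballI impI)
    fix c assume "c \<in> smap ` Y" and cc: "Lind c = L \<and> lead_coeff (Lcoef c) = 1"
    then obtain c' where c': "c' \<in> Y" "c = smap c'" by auto
    have c'A: "c' \<in> Avec f l" using c' YA by auto
    have "Lind c' = L" using cc c' Lind_smap[OF c'A] by simp
    then have "Lcoef c' = c' ! p" using Lp Lcoef_at by simp
    then have Lc: "Lcoef c = sg (c' ! p)" using c' Lcoef_smap[OF c'A] by simp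
    define q where "q = c' ! p"
    obtain t where t: "q = g0 * t" using g0dvd[OF c'(1)] by (auto simp: q_def)
    have sq0: "sg q \<noteq> 0" using cc Lc by (auto simp: q_def)
    have "[X ^ d * sg q = reflect_poly g0 * sg t] (mod f)"
    proof -
      have "sg q = (sg g0 * sg t) mod f" by (simp add: t sg_mult)
      then have A: "[X ^ d * sg q = X ^ d * (sg g0 * sg t)] (mod f)"
        by (simp add: cong_def mod_mult_right_eq)
      have "[X ^ d * sg g0 = reflect_poly g0] (mod f)"
        using reflg red_mod[of "reflect_poly g0"] deg_rg dg0 by (simp add: cong_def Xpow d_def)
      then have "[(X ^ d * sg g0) * sg t = reflect_poly g0 * sg t] (mod f)"
        using cong_mult cong_refl by blast
      then have B: "[X ^ d * (sg g0 * sg t) = reflect_poly g0 * sg t] (mod f)"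
        by (simp add: mult.assoc)
      show ?thesis using cong_trans[OF A B] .
    qed
    then have P: "[h ^ d * (X ^ d * sg q) = h ^ d * (reflect_poly g0 * sg t)] (mod f)"
      using cong_mult cong_refl by blast
    have Q: "[h ^ d * (X ^ d * sg q) = sg q] (mod f)"
    proof -
      have "[h ^ d * X ^ d = 1] (mod f)"
        using cong_pow[OF Xh_cong, of d] by (simp add: power_mult_distrib mult.commute)
      then have "[(h ^ d * X ^ d) * sg q = 1 * sg q] (mod f)" using cong_mult cong_refl by blast
      then show ?thesis by (simp add: mult.assoc)
    qed
    have "[sg q = h ^ d * (reflect_poly g0 * sg t)] (mod f)" using cong_trans[OF cong_sym[OF Q] P] .
    then have "f dvd sg q - h ^ d * (reflect_poly g0 * sg t)" by (simp add: cong_iff_dvd_diff)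
    then have D1: "reflect_poly g0 dvd sg q - h ^ d * (reflect_poly g0 * sg t)" using rdvd dvd_trans by blast
    have D2: "reflect_poly g0 dvd h ^ d * (reflect_poly g0 * sg t)" by simp
    have "reflect_poly g0 dvd sg q" using dvd_add[OF D1 D2] by simp
    then have "d \<le> degree (sg q)" using dvd_imp_degree_le[OF _ sq0, of "reflect_poly g0"] deg_rg by simp
    then show "degree g0s \<le> degree (Lcoef c)" using deg_g0s Lc by (simp add: q_def)
  qed
  show ?thesis
    unfolding leading_element_def is_Lcoef_code_def
    using In Lr LcY Cr g0s_m minimal by auto
qed

end

theorem mainTheorem16:
  fixes f :: "'a::{field,finite} poly" and m l :: nat and s :: 'a
    and C :: "'a poly list set" and gs :: "'a poly list list"
  assumes "0 < m"
    and "s = 1 \<or> s = -1"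
    and "f = monom 1 m + [:s:]"
    and "A_code f l C"
    and "basis_of_divisors C gs"
  shows "basis_of_divisors (Fdual f l (dual f l C)) (map (recip_row f) gs)"
proof -
  interpret xm f m s using assms(1-3) by unfold_locales
  have C: "A_code f l C" by (rule assms(4))
  have CA: "C \<subseteq> Avec f l" using code_Avec[OF C] .
  have D: "Fdual f l (dual f l C) = smap ` C" using Fdd[OF C] .
  have cs: "code_seq (smap ` C) j = smap ` code_seq C j" for j using code_seq_smap[OF CA] .
  have csA: "code_seq C j \<subseteq> Avec f l" for j using code_seq_sub CA by blast
  have B1: "\<forall>j<length gs. nonzero_code (code_seq C j)"
    and B2: "\<forall>j\<ge>length gs. \<not> nonzero_code (code_seq C j)"
    and B3: "\<forall>j<length gs. leading_element (code_seq C j) (gs ! j)"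
    using assms(5) by (auto simp: basis_of_divisors_def)
  show ?thesis unfolding basis_of_divisors_def D
  proof (intro conjI allI impI)
    fix j assume "j < length (map (recip_row f) gs)"
    then have j: "j < length gs" by simp
    show "nonzero_code (code_seq (smap ` C) j)"
      using B1 j by (simp add: cs nonzero_smap[OF csA])
    have cl: "(\<forall>u\<in>code_seq C j. \<forall>v\<in>code_seq C j. map2 (+) u v \<in> code_seq C j)"
      "(\<forall>a v. degree a < m \<longrightarrow> v \<in> code_seq C j \<longrightarrow> map (\<lambda>y. (a * y) mod f) v \<in> code_seq C j)"
      using code_seq_closed[OF C, of j] by auto
    show "leading_element (code_seq (smap ` C) j) (map (recip_row f) gs ! j)"
      using lead_transfer[OF csA cl(1) cl(2)] B1 B3 j by (simp add: cs)
  next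
    fix j assume "length (map (recip_row f) gs) \<le> j"
    then show "\<not> nonzero_code (code_seq (smap ` C) j)"
      using B2 by (simp add: cs nonzero_smap[OF csA])
  qed
qed

end
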